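(* There exists a constant $C_\xi>0$ depending only on $\xi$ such that for every $\beta>0$, $$\beta x_\beta(q)\le\frac{C_\xi}{\xi(1)-\xi(q)}\quad\text{for all }q\in[0,1).$$
   Context: For $N\ge1$ let $S_N=\{\sigma\in\mathbb R^N:\sum_i\sigma_i^2=N\}$, $m_N$ the uniform probability measure on $S_N$. Let $(\gamma_p)_{p\ge2}$ be real with $\sum_{p\ge2}2^p\gamma_p^2<\infty$, $h\in\mathbb R$, $\xi(s)=\sum_{p\ge2}\gamma_p^2s^p$; $X_N(\sigma)=\sum_{p\ge2}\gamma_pN^{-(p-1)/2}\sum_{i_1,\dots,i_p=1}^N g_{i_1,\dots,i_p}\sigma_{i_1}\cdots\sigma_{i_p}$ with i.i.d. standard Gaussians $g$, and $H_N(\sigma)=X_N(\sigma)+h\sum_i\sigma_i$. For $\beta>0$ let $\xi_\beta=\beta^2\xi$, $h_\beta=\beta h$, $\mathcal M$ the set of distribution functions $x$ on $[0,1]$ with $x(\hat q)=1$ for some $\hat q<1$, $\hat x(q)=\int_q^1x$, and $\mathcal Q_\beta(x)=\frac12\big(\int_0^1(\xi'_\beta(q)+h_\beta^2)x(q)dq+\int_0^{\hat q}\frac{dq}{\hat x(q)}+\log(1-\hat q)\big)$ (any $\hat q<1$ with $x(\hat q)=1$). It is known that $\lim_N\mathbb E\frac1N\log\int_{S_N}e^{\beta H_N}dm_N=\inf_{\mathcal M}\mathcal Q_\beta$ and that this infimum is attained at a unique $x_\beta\in\mathcal M$. *)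

theory Defs
  imports "HOL-Analysis.Analysis"
begin

definition xi :: "(nat \<Rightarrow> real) \<Rightarrow> real \<Rightarrow> real" where
  "xi gam s = (\<Sum>p. (gam (p + 2))\<^sup>2 * s ^ (p + 2))"

text \<open>Distribution functions on [0,1] (CDFs of probability measures on [0,1],
  considered on [0,1]) that reach 1 at some point qhat < 1.\<close>
definition distr_fun_01 :: "(real \<Rightarrow> real) \<Rightarrow> bool" where
  "distr_fun_01 x \<longleftrightarrow> mono_on {0..1} x \<and> (\<forall>q\<in>{0..1}. 0 \<le> x q \<and> x q \<le> 1)
     \<and> x 1 = 1 \<and> (\<forall>q\<in>{0..<1}. (x \<longlongrightarrow> x q) (at_right q))"

definition parisi_M :: "(real \<Rightarrow> real) set" where
  "parisi_M = {x. distr_fun_01 x \<and> (\<exists>qh. 0 \<le> qh \<and> qh < 1 \<and> x qh = 1)}"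

definition xhat :: "(real \<Rightarrow> real) \<Rightarrow> real \<Rightarrow> real" where
  "xhat x q = integral {q..1} x"

text \<open>The Parisi functional Q_beta (the value does not depend on the choice of qhat).\<close>
definition parisi_Q :: "(nat \<Rightarrow> real) \<Rightarrow> real \<Rightarrow> real \<Rightarrow> (real \<Rightarrow> real) \<Rightarrow> real" where
  "parisi_Q gam h beta x =
     (let qh = (SOME qh. 0 \<le> qh \<and> qh < 1 \<and> x qh = 1) in
      (1/2) * (integral {0..1} (\<lambda>q. (beta\<^sup>2 * deriv (xi gam) q + (beta * h)\<^sup>2) * x q)
               + integral {0..qh} (\<lambda>q. 1 / xhat x q) + ln (1 - qh)))"

text \<open>x is a minimizer of Q_beta over M (by the known result it is the unique one, x_beta).\<close>
definition parisi_minimizer :: "(nat \<Rightarrow> real) \<Rightarrow> real \<Rightarrow> real \<Rightarrow> (real \<Rightarrow> real) \<Rightarrow> bool" where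
  "parisi_minimizer gam h beta x \<longleftrightarrow>
     x \<in> parisi_M \<and> (\<forall>y\<in>parisi_M. parisi_Q gam h beta x \<le> parisi_Q gam h beta y)"

end

theory Submission
  imports Defs
begin

definition coef :: "(nat \<Rightarrow> real) \<Rightarrow> nat \<Rightarrow> real" where
  "coef gam n = (if n < 2 then 0 else (gam n)\<^sup>2)"

definition DX :: "(nat \<Rightarrow> real) \<Rightarrow> real \<Rightarrow> real" where
  "DX gam s = (\<Sum>n. diffs (coef gam) n * s ^ n)"

lemma coef_nonneg: "0 \<le> coef gam n"
  by (simp add: coef_def)

lemma summ2:
  assumes "summable (\<lambda>p. 2 ^ (p + 2) * (gam (p + 2))\<^sup>2)"
  shows "summable (\<lambda>n. coef gam n * 2 ^ n)"
proof -
  have "(\<lambda>n. coef gam (n+2) * 2 ^ (n+2)) = (\<lambda>p. 2 ^ (p + 2) * (gam (p + 2))\<^sup>2)"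
    by (auto simp: coef_def)
  then show ?thesis using assms summable_iff_shift[of "\<lambda>n. coef gam n * 2 ^ n" 2] by simp
qed

lemma summ_in:
  assumes "summable (\<lambda>p. 2 ^ (p + 2) * (gam (p + 2))\<^sup>2)" "\<bar>s\<bar> < 2"
  shows "summable (\<lambda>n. coef gam n * s ^ n)"
  using powser_inside[OF summ2[OF assms(1)], of s] assms(2) by simp

lemma summD:
  assumes "summable (\<lambda>p. 2 ^ (p + 2) * (gam (p + 2))\<^sup>2)" "\<bar>s\<bar> < 2"
  shows "summable (\<lambda>n. diffs (coef gam) n * s ^ n)"
  by (rule termdiff_converges[where K=2]) (use assms summ_in in auto)

lemma xi_eq:
  assumes "summable (\<lambda>p. 2 ^ (p + 2) * (gam (p + 2))\<^sup>2)" "\<bar>s\<bar> < 2"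
  shows "xi gam s = (\<Sum>n. coef gam n * s ^ n)"
proof -
  let ?f = "\<lambda>n. coef gam n * s ^ n"
  have "?f sums (\<Sum>n. ?f n)" using summ_in[OF assms] by (simp add: summable_sums)
  moreover have "(\<Sum>i<2. ?f i) = 0" by (simp add: coef_def numeral_2_eq_2)
  ultimately have "(\<lambda>i. ?f (i + 2)) sums (\<Sum>n. ?f n)"
    using sums_iff_shift[of ?f 2] by simp
  moreover have "(\<lambda>i. ?f (i + 2)) = (\<lambda>p. (gam (p + 2))\<^sup>2 * s ^ (p + 2))"
    by (auto simp: coef_def)
  ultimately show ?thesis unfolding xi_def by (simp add: sums_iff)
qed

lemma xi_deriv:
  assumes "summable (\<lambda>p. 2 ^ (p + 2) * (gam (p + 2))\<^sup>2)" "\<bar>s\<bar> < 2"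
  shows "(xi gam has_field_derivative DX gam s) (at s)"
proof -
  have "((\<lambda>x. \<Sum>n. coef gam n * x^n) has_field_derivative DX gam s) (at s)"
    unfolding DX_def by (rule termdiffs_strong[OF summ2[OF assms(1)]]) (use assms in auto)
  then show ?thesis
    by (rule has_field_derivative_transform_within_open[where S="{-2<..<2}"])
       (use assms xi_eq in auto)
qed

lemma deriv_xi:
  assumes "summable (\<lambda>p. 2 ^ (p + 2) * (gam (p + 2))\<^sup>2)" "\<bar>s\<bar> < 2"
  shows "deriv (xi gam) s = DX gam s"
  using xi_deriv[OF assms] DERIV_imp_deriv by blast

lemma DX_mono:
  assumes "summable (\<lambda>p. 2 ^ (p + 2) * (gam (p + 2))\<^sup>2)" "0 \<le> s" "s \<le> t" "t < 2"
  shows "0 \<le> DX gam s \<and> DX gam s \<le> DX gam t"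
proof -
  have dn: "0 \<le> diffs (coef gam) n" for n by (simp add: diffs_def coef_nonneg)
  have s1: "summable (\<lambda>n. diffs (coef gam) n * s ^ n)" by (rule summD) (use assms in auto)
  have s2: "summable (\<lambda>n. diffs (coef gam) n * t ^ n)" by (rule summD) (use assms in auto)
  show ?thesis unfolding DX_def
  proof
    show "0 \<le> (\<Sum>n. diffs (coef gam) n * s ^ n)"
      by (rule suminf_nonneg[OF s1]) (use dn assms in auto)
    show "(\<Sum>n. diffs (coef gam) n * s ^ n) \<le> (\<Sum>n. diffs (coef gam) n * t ^ n)"
      by (rule suminf_le[OF _ s1 s2]) (use dn assms in \<open>auto intro!: mult_left_mono power_mono\<close>)
  qed
qed

lemma xi_ftc:
  assumes "summable (\<lambda>p. 2 ^ (p + 2) * (gam (p + 2))\<^sup>2)" "0 \<le> a" "a \<le> b" "b \<le> 1"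
  shows "(DX gam has_integral (xi gam b - xi gam a)) {a..b}"
proof (rule fundamental_theorem_of_calculus[OF assms(3)])
  fix x assume "x \<in> {a..b}"
  then have "\<bar>x\<bar> < 2" using assms by auto
  then show "(xi gam has_vector_derivative DX gam x) (at x within {a..b})"
    using xi_deriv[OF assms(1)] has_real_derivative_iff_has_vector_derivative
    by (metis has_vector_derivative_at_within)
qed

lemma xi_pos:
  assumes "summable (\<lambda>p. 2 ^ (p + 2) * (gam (p + 2))\<^sup>2)" "\<exists>p. gam (p + 2) \<noteq> 0"
    and "0 \<le> q" "q < 1"
  shows "0 < xi gam 1 - xi gam q"
proof -
  have sa: "summable (\<lambda>p. (gam (p + 2))\<^sup>2 * s ^ (p + 2))" if "\<bar>s\<bar> < 2" for s
  proof -
    have "summable (\<lambda>i. coef gam (i+2) * s ^ (i+2))"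
      using summ_in[OF assms(1) that] summable_iff_shift[of "\<lambda>n. coef gam n * s ^ n" 2] by simp
    then show ?thesis by (simp add: coef_def)
  qed
  obtain p0 where p0: "gam (p0 + 2) \<noteq> 0" using assms(2) by blast
  have "xi gam 1 - xi gam q = (\<Sum>p. (gam (p + 2))\<^sup>2 * 1 ^ (p + 2) - (gam (p + 2))\<^sup>2 * q ^ (p + 2))"
    unfolding xi_def by (rule suminf_diff) (use sa[of 1] sa[of q] assms in auto)
  also have "\<dots> > 0"
  proof (rule suminf_pos2[where i=p0])
    show "summable (\<lambda>p. (gam (p + 2))\<^sup>2 * 1 ^ (p + 2) - (gam (p + 2))\<^sup>2 * q ^ (p + 2))"
      by (rule summable_diff) (use sa[of 1] sa[of q] assms in auto)
    show "0 \<le> (gam (n + 2))\<^sup>2 * 1 ^ (n + 2) - (gam (n + 2))\<^sup>2 * q ^ (n + 2)" for n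
    proof -
      have "q ^ (n + 2) \<le> 1" using assms by (intro power_le_one) auto
      then show ?thesis by (simp add: mult_left_le del: power_Suc)
    qed
    have "q ^ (p0 + 2) < 1" using assms power_strict_mono[of q 1 "p0+2"] by (simp del: power_Suc)
    then show "0 < (gam (p0 + 2))\<^sup>2 * 1 ^ (p0 + 2) - (gam (p0 + 2))\<^sup>2 * q ^ (p0 + 2)"
      using p0 by simp
  qed
  finally show ?thesis .
qed

lemma M_props:
  assumes "z \<in> parisi_M"
  shows "mono_on {0..1} z" "\<And>q. q \<in> {0..1} \<Longrightarrow> 0 \<le> z q" "\<And>q. q \<in> {0..1} \<Longrightarrow> z q \<le> 1"
    "\<exists>qh. 0 \<le> qh \<and> qh < 1 \<and> z qh = 1"
  using assms by (auto simp: parisi_M_def distr_fun_01_def)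

lemma M_int:
  assumes "z \<in> parisi_M" "0 \<le> a" "b \<le> 1"
  shows "z integrable_on {a..b}"
  using M_props(1)[OF assms(1)] assms
  by (intro integrable_on_mono_on) (auto intro: mono_on_subset)

lemma ln_ftc:
  fixes a b :: real
  assumes "a \<le> b" "b < 1"
  shows "((\<lambda>q. 1 / (1 - q)) has_integral (ln (1 - a) - ln (1 - b))) {a..b}"
proof -
  have "((\<lambda>q. 1 / (1 - q)) has_integral ((- ln (1 - b)) - (- ln (1 - a)))) {a..b}"
  proof (rule fundamental_theorem_of_calculus[OF assms(1)])
    fix x assume "x \<in> {a..b}"
    then have x: "x < 1" using assms by auto
    have "((\<lambda>q. - ln (1 - q)) has_real_derivative 1 / (1 - x)) (at x)"
      using x by (auto intro!: derivative_eq_intros simp: field_simps)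
    then show "((\<lambda>q. - ln (1 - q)) has_vector_derivative 1 / (1 - x)) (at x within {a..b})"
      by (metis has_real_derivative_iff_has_vector_derivative has_vector_derivative_at_within)
  qed
  then show ?thesis by simp
qed

lemma xhat_cont:
  assumes "z \<in> parisi_M"
  shows "continuous_on {0..1} (xhat z)"
  unfolding xhat_def using indefinite_integral_continuous_1'[OF M_int[OF assms, of 0 1]] by simp

lemma xhat_bounds:
  assumes "z \<in> parisi_M" "0 \<le> qh" "qh < 1" "z qh = 1" "q \<in> {0..qh}"
  shows "1 - qh \<le> xhat z q" "xhat z q \<le> 1 - q"
proof -
  have one: "z s = 1" if "s \<in> {qh..1}" for s
  proof -
    have "z qh \<le> z s" using mono_onD[OF M_props(1)[OF assms(1)], of qh s] that assms by auto
    then show ?thesis using M_props(3)[OF assms(1), of s] that assms by auto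
  qed
  have "integral {q..1} z \<le> integral {q..1} (\<lambda>_. 1::real)"
    by (rule integral_le) (use assms M_int[OF assms(1)] M_props(3)[OF assms(1)] in auto)
  then show "xhat z q \<le> 1 - q" using assms by (simp add: xhat_def)
  have "integral {q..qh} z + integral {qh..1} z = integral {q..1} z"
    by (rule Henstock_Kurzweil_Integration.integral_combine) (use assms M_int[OF assms(1)] in auto)
  moreover have "0 \<le> integral {q..qh} z"
    by (rule integral_nonneg) (use assms M_int[OF assms(1)] M_props(2)[OF assms(1)] in auto)
  moreover have "integral {qh..1} z = integral {qh..1} (\<lambda>_. 1::real)"
    by (rule integral_cong) (use one in auto)
  ultimately show "1 - qh \<le> xhat z q" using assms by (simp add: xhat_def)
qed

lemma E_nonneg:
  assumes "z \<in> parisi_M" "0 \<le> qh" "qh < 1" "z qh = 1"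
  shows "0 \<le> integral {0..qh} (\<lambda>q. 1 / xhat z q) + ln (1 - qh)"
proof -
  have pos: "0 < xhat z q" if "q \<in> {0..qh}" for q
    using xhat_bounds(1)[OF assms that] assms by auto
  have "continuous_on {0..qh} (\<lambda>q. 1 / xhat z q)"
    by (intro continuous_intros continuous_on_subset[OF xhat_cont[OF assms(1)]])
       (use pos assms in \<open>auto simp: less_imp_neq[symmetric]\<close>)
  then have "(\<lambda>q. 1 / xhat z q) integrable_on {0..qh}"
    by (rule integrable_continuous_interval)
  then have I: "((\<lambda>q. 1 / xhat z q) has_integral integral {0..qh} (\<lambda>q. 1 / xhat z q)) {0..qh}"
    by (rule integrable_integral)
  have "ln (1 - 0) - ln (1 - qh) \<le> integral {0..qh} (\<lambda>q. 1 / xhat z q)"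
  proof (rule has_integral_le[OF ln_ftc I])
    fix q assume q: "q \<in> {0..qh}"
    show "1 / (1 - q) \<le> 1 / xhat z q"
      using xhat_bounds(2)[OF assms q] pos[OF q] by (intro divide_left_mono) auto
  qed (use assms in auto)
  then show ?thesis by simp
qed

definition yr :: "real \<Rightarrow> real \<Rightarrow> real" where
  "yr r = (\<lambda>q. if q < r then 0 else 1)"

lemma yr_mono: "mono_on S (yr r)"
  by (auto intro!: mono_onI simp: yr_def)

lemma yr_M:
  assumes "0 \<le> r" "r < 1"
  shows "yr r \<in> parisi_M"
proof -
  have rc: "(yr r \<longlongrightarrow> yr r q) (at_right q)" for q
  proof (cases "q < r")
    case True
    have "\<forall>\<^sub>F s in at_right q. yr r s = yr r q"
      unfolding eventually_at_right_field using True by (auto simp: yr_def intro!: exI[of _ r])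
    then show ?thesis by (rule tendsto_eventually)
  next
    case False
    have "\<forall>\<^sub>F s in at_right q. yr r s = yr r q"
      unfolding eventually_at_right_field using False by (auto simp: yr_def intro!: exI[of _ "q+1"])
    then show ?thesis by (rule tendsto_eventually)
  qed
  show ?thesis unfolding parisi_M_def distr_fun_01_def
    using assms rc yr_mono by (auto simp: yr_def intro!: exI[of _ r])
qed

lemma xhat_yr:
  assumes "0 \<le> r" "r < 1" "q \<in> {0..1}"
  shows "xhat (yr r) q = 1 - max q r"
proof (cases "r \<le> q")
  case True
  have "integral {q..1} (yr r) = integral {q..1} (\<lambda>_. 1::real)"
    by (rule integral_cong) (use True in \<open>auto simp: yr_def\<close>)
  then show ?thesis using True assms by (simp add: xhat_def)
next
  case False
  have "integral {q..r} (yr r) + integral {r..1} (yr r) = integral {q..1} (yr r)"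
    by (rule Henstock_Kurzweil_Integration.integral_combine)
       (use False assms in \<open>auto intro: integrable_on_mono_on yr_mono\<close>)
  moreover have "integral {q..r} (yr r) = integral {q..r} (\<lambda>_. 0::real)"
    by (rule integral_spike[of "{r}"]) (auto simp: yr_def)
  moreover have "integral {r..1} (yr r) = integral {r..1} (\<lambda>_. 1::real)"
    by (rule integral_cong) (auto simp: yr_def)
  ultimately show ?thesis using False assms by (simp add: xhat_def)
qed

lemma E_yr:
  assumes "0 \<le> r" "r \<le> qh" "qh < 1"
  shows "integral {0..qh} (\<lambda>q. 1 / xhat (yr r) q) + ln (1 - qh) \<le> 1 / (1 - r)"
proof -
  have h1: "((\<lambda>q. 1 / (1 - max q r)) has_integral (r * (1 / (1 - r)))) {0..r}"
  proof -
    have "((\<lambda>q. 1 / (1 - r)) has_integral (r * (1 / (1 - r)))) {0..r}"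
      using has_integral_const_real[of "1 / (1 - r)" 0 r] assms by simp
    then show ?thesis by (rule has_integral_eq[rotated]) auto
  qed
  have h2: "((\<lambda>q. 1 / (1 - max q r)) has_integral (ln (1 - r) - ln (1 - qh))) {r..qh}"
    using ln_ftc[OF assms(2,3)] by (rule has_integral_eq[rotated]) auto
  have "((\<lambda>q. 1 / (1 - max q r)) has_integral (r * (1 / (1 - r)) + (ln (1 - r) - ln (1 - qh)))) {0..qh}"
    by (rule has_integral_combine[OF _ _ h1 h2]) (use assms in auto)
  then have "((\<lambda>q. 1 / xhat (yr r) q) has_integral (r * (1 / (1 - r)) + (ln (1 - r) - ln (1 - qh)))) {0..qh}"
    by (rule has_integral_eq[rotated]) (use assms xhat_yr in auto)
  then have "integral {0..qh} (\<lambda>q. 1 / xhat (yr r) q) + ln (1 - qh) = r * (1 / (1 - r)) + ln (1 - r)"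
    by (simp add: integral_unique)
  also have "\<dots> \<le> r * (1 / (1 - r))" using assms by simp
  also have "\<dots> \<le> 1 / (1 - r)" using assms divide_right_mono[of r 1 "1-r"] by simp
  finally show ?thesis .
qed


lemma main_bound:
  fixes gam :: "nat \<Rightarrow> real" and h beta q :: real and x :: "real \<Rightarrow> real"
  assumes S: "summable (\<lambda>p. 2 ^ (p + 2) * (gam (p + 2))\<^sup>2)"
    and nz: "\<exists>p. gam (p + 2) \<noteq> 0"
    and beta: "0 < beta" and mini: "parisi_minimizer gam h beta x" and q: "q \<in> {0..<1}"
  shows "beta * x q * (xi gam 1 - xi gam q) \<le> DX gam 1 + 1"
proof -
  define Dm where "Dm = DX gam 1"
  define A where "A = (\<lambda>s. beta\<^sup>2 * deriv (xi gam) s + (beta * h)\<^sup>2)"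
  define m where "m = x q"
  have xM: "x \<in> parisi_M" and minQ: "\<And>y. y \<in> parisi_M \<Longrightarrow> parisi_Q gam h beta x \<le> parisi_Q gam h beta y"
    using mini by (auto simp: parisi_minimizer_def)
  have q0: "0 \<le> q" "q < 1" using q by auto
  have A_eq: "A s = beta\<^sup>2 * DX gam s + (beta * h)\<^sup>2" if "s \<in> {0..1}" for s
    using deriv_xi[OF S, of s] that by (simp add: A_def)
  have DXb: "0 \<le> DX gam s \<and> DX gam s \<le> DX gam t" if "0 \<le> s" "s \<le> t" "t \<le> 1" for s t
    using DX_mono[OF S, of s t] that by auto
  have Dm0: "0 \<le> Dm" using DXb[of 1 1] by (simp add: Dm_def)
  have A_nn: "0 \<le> A s" if "s \<in> {0..1}" for s
    using A_eq[OF that] DXb[of s s] that by auto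
  have A_mono: "mono_on {0..1} A"
  proof (rule mono_onI)
    fix s t :: real assume "s \<in> {0..1}" "t \<in> {0..1}" "s \<le> t"
    then show "A s \<le> A t" using A_eq DXb[of s t] by (auto intro: mult_left_mono)
  qed
  have x_nn: "0 \<le> x s" "x s \<le> 1" if "s \<in> {0..1}" for s
    using M_props(2,3)[OF xM that] by auto
  have x_mono: "mono_on {0..1} x" using M_props(1)[OF xM] .
  have IA: "(A has_integral (beta\<^sup>2 * (xi gam 1 - xi gam a) + (beta * h)\<^sup>2 * (1 - a))) {a..1}"
    if "0 \<le> a" "a \<le> 1" for a
  proof -
    have "((\<lambda>s. beta\<^sup>2 * DX gam s + (beta * h)\<^sup>2) has_integral
           (beta\<^sup>2 * (xi gam 1 - xi gam a) + (beta * h)\<^sup>2 * (1 - a))) {a..1}"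
      using has_integral_add[OF has_integral_mult_right[where c="beta\<^sup>2", OF xi_ftc[OF S that(1,2) order_refl]]
             has_integral_const_real[of "(beta * h)\<^sup>2" a 1]] that by (simp add: mult.commute[of "1 - a"])
    then show ?thesis by (rule has_integral_eq[rotated]) (use A_eq that in auto)
  qed
  have Dle: "xi gam 1 - xi gam a \<le> Dm * (1 - a)" if "0 \<le> a" "a \<le> 1" for a
  proof -
    have "xi gam 1 - xi gam a \<le> Henstock_Kurzweil_Integration.content {a..1} *\<^sub>R Dm"
      by (rule has_integral_le[OF xi_ftc[OF S that order_refl] has_integral_const_real[of Dm a 1]])
         (use that DXb in \<open>auto simp: Dm_def\<close>)
    then show ?thesis using that by (simp add: mult.commute)
  qed
  have Dpos: "0 < xi gam 1 - xi gam q" using xi_pos[OF S nz q0] .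
  define Ix where "Ix = integral {0..1} (\<lambda>s. A s * x s)"
  have Ix_lb: "m * (beta\<^sup>2 * (xi gam 1 - xi gam q) + (beta * h)\<^sup>2 * (1 - q)) \<le> Ix"
  proof -
    have pm: "mono_on {0..1} (\<lambda>s. A s * x s)"
    proof (rule mono_onI)
      fix s t :: real assume st: "s \<in> {0..1}" "t \<in> {0..1}" "s \<le> t"
      show "A s * x s \<le> A t * x t"
        using st mono_onD[OF A_mono st] mono_onD[OF x_mono st] A_nn x_nn
        by (intro mult_mono) auto
    qed
    have int: "(\<lambda>s. A s * x s) integrable_on {a..b}" if "0 \<le> a" "b \<le> 1" for a b
      using pm that by (intro integrable_on_mono_on) (auto intro: mono_on_subset)
    have c: "integral {0..q} (\<lambda>s. A s * x s) + integral {q..1} (\<lambda>s. A s * x s) = Ix"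
      unfolding Ix_def
      by (rule Henstock_Kurzweil_Integration.integral_combine) (use q0 int in auto)
    have n1: "0 \<le> integral {0..q} (\<lambda>s. A s * x s)"
      by (rule integral_nonneg) (use q0 int A_nn x_nn in auto)
    have "m * (beta\<^sup>2 * (xi gam 1 - xi gam q) + (beta * h)\<^sup>2 * (1 - q)) \<le> integral {q..1} (\<lambda>s. A s * x s)"
    proof (rule has_integral_le[OF has_integral_mult_right[OF IA[OF q0(1)]] integrable_integral[OF int]])
      fix s assume s: "s \<in> {q..1}"
      have "m \<le> x s" unfolding m_def using mono_onD[OF x_mono, of q s] s q0 by auto
      moreover have "0 \<le> A s" using A_nn[of s] s q0 by auto
      ultimately have "A s * m \<le> A s * x s" by (rule mult_left_mono)
      then show "m * A s \<le> A s * x s" by (simp add: mult.commute)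
    qed (use q0 in auto)
    then show ?thesis using c n1 by linarith
  qed
  have Iy: "integral {0..1} (\<lambda>s. A s * yr r s) = beta\<^sup>2 * (xi gam 1 - xi gam r) + (beta * h)\<^sup>2 * (1 - r)"
    if "0 \<le> r" "r < 1" for r
  proof -
    have h1: "((\<lambda>s. A s * yr r s) has_integral 0) {0..r}"
      by (rule has_integral_spike_eq[of "{r}", THEN iffD2, OF _ _ has_integral_0]) (auto simp: yr_def)
    have h2: "((\<lambda>s. A s * yr r s) has_integral (beta\<^sup>2 * (xi gam 1 - xi gam r) + (beta * h)\<^sup>2 * (1 - r))) {r..1}"
      using IA[of r] that by (rule_tac has_integral_eq[rotated]) (auto simp: yr_def)
    show ?thesis using has_integral_combine[OF _ _ h1 h2] that by (simp add: integral_unique)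
  qed
  have Qx: "Ix \<le> 2 * parisi_Q gam h beta x"
  proof -
    define qh where "qh = (SOME qh. 0 \<le> qh \<and> qh < 1 \<and> x qh = 1)"
    have qh: "0 \<le> qh \<and> qh < 1 \<and> x qh = 1"
      unfolding qh_def using M_props(4)[OF xM] by (rule someI_ex)
    have E: "0 \<le> integral {0..qh} (\<lambda>q. 1 / xhat x q) + ln (1 - qh)"
      using E_nonneg[OF xM, of qh] qh by auto
    show ?thesis
      unfolding parisi_Q_def Let_def qh_def[symmetric] Ix_def A_def using E by simp
  qed
  have Qy: "2 * parisi_Q gam h beta (yr r) \<le> beta\<^sup>2 * (xi gam 1 - xi gam r) + (beta * h)\<^sup>2 * (1 - r) + 1 / (1 - r)"
    if "0 \<le> r" "r < 1" for r
  proof -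
    define qh where "qh = (SOME qh. 0 \<le> qh \<and> qh < 1 \<and> yr r qh = 1)"
    have qh: "0 \<le> qh \<and> qh < 1 \<and> yr r qh = 1"
      unfolding qh_def using M_props(4)[OF yr_M[OF that]] by (rule someI_ex)
    then have rq: "r \<le> qh" by (auto simp: yr_def split: if_splits)
    have E: "integral {0..qh} (\<lambda>q. 1 / xhat (yr r) q) + ln (1 - qh) \<le> 1 / (1 - r)"
      using E_yr[OF that(1) rq] qh by auto
    show ?thesis using E Iy[OF that]
      unfolding parisi_Q_def Let_def qh_def[symmetric] A_def by simp
  qed
  have key: "Ix \<le> beta\<^sup>2 * (xi gam 1 - xi gam r) + (beta * h)\<^sup>2 * (1 - r) + 1 / (1 - r)"
    if "0 \<le> r" "r < 1" for r
    using Qx Qy[OF that] minQ[OF yr_M[OF that]] by linarith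
  have m01: "0 \<le> m" "m \<le> 1" using x_nn[of q] q0 by (auto simp: m_def)
  define Del where "Del = xi gam 1 - xi gam q"
  have DelD: "Del \<le> Dm * (1 - q)" using Dle[of q] q0 by (simp add: Del_def)
  have Del0: "0 < Del" using Dpos by (simp add: Del_def)
  show ?thesis
  proof (cases "m * beta * (1 - q) < 1")
    case True
    have "beta * m * Del \<le> beta * m * (Dm * (1 - q))"
      using DelD m01 beta by (intro mult_left_mono) auto
    also have "\<dots> = (m * beta * (1 - q)) * Dm" by simp
    also have "\<dots> \<le> 1 * Dm" using True Dm0 by (intro mult_right_mono) auto
    finally show ?thesis by (simp add: m_def Del_def Dm_def)
  next
    case False
    then have F: "1 \<le> m * beta * (1 - q)" by simp
    have "m * beta * (1 - q) \<le> beta"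
    proof -
      have "m * (1 - q) \<le> 1 * 1" using m01 q0 by (intro mult_mono) auto
      then show ?thesis using beta mult_left_mono[of "m * (1-q)" 1 beta] by (simp add: algebra_simps)
    qed
    then have b1: "1 \<le> beta" using F by linarith
    define r where "r = 1 - 1 / beta"
    have r: "0 \<le> r" "r < 1" using b1 beta by (auto simp: r_def field_simps)
    have r1: "1 - r = 1 / beta" by (simp add: r_def)
    have K: "Ix \<le> beta\<^sup>2 * (Dm / beta) + (beta * h)\<^sup>2 / beta + beta"
    proof -
      have "beta\<^sup>2 * (xi gam 1 - xi gam r) \<le> beta\<^sup>2 * (Dm * (1 - r))"
        using Dle[of r] r by (intro mult_left_mono) auto
      then show ?thesis using key[OF r] r1 by simp
    qed
    have hh: "beta * h\<^sup>2 \<le> m * (beta * h)\<^sup>2 * (1 - q)"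
    proof -
      have "beta * h\<^sup>2 * 1 \<le> beta * h\<^sup>2 * (m * beta * (1 - q))"
        using F beta by (intro mult_left_mono) auto
      then show ?thesis by (simp add: power2_eq_square algebra_simps)
    qed
    have eq1: "beta\<^sup>2 * (Dm / beta) = beta * Dm" using beta by (simp add: power2_eq_square)
    have eq2: "(beta * h)\<^sup>2 / beta = beta * h\<^sup>2" using beta by (simp add: power2_eq_square)
    have "m * (beta\<^sup>2 * Del) \<le> beta * Dm + beta"
      using Ix_lb K hh eq1 eq2 unfolding Del_def by (simp add: algebra_simps)
    then have "beta * (beta * m * Del) \<le> beta * (Dm + 1)" by (simp add: power2_eq_square algebra_simps)
    then have "beta * m * Del \<le> Dm + 1" using beta by simp
    then show ?thesis by (simp add: m_def Del_def Dm_def)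
  qed
qed

theorem lemma1:
  fixes gam :: "nat \<Rightarrow> real"
  assumes "summable (\<lambda>p. 2 ^ (p + 2) * (gam (p + 2))\<^sup>2)"
    and "\<exists>p. gam (p + 2) \<noteq> 0"
  shows "\<exists>C>0. \<forall>(h::real) (beta::real) x q.
           0 < beta \<longrightarrow> parisi_minimizer gam h beta x \<longrightarrow> q \<in> {0..<1} \<longrightarrow>
           beta * x q \<le> C / (xi gam 1 - xi gam q)"
proof (intro exI[of _ "DX gam 1 + 1"] conjI allI impI)
  have "0 \<le> DX gam 1" using DX_mono[OF assms(1), of 1 1] by simp
  then show "0 < DX gam 1 + 1" by simp
  fix h beta x q
  assume b: "0 < (beta::real)" and mn: "parisi_minimizer gam h beta x" and q: "q \<in> {0..<(1::real)}"
  have "0 < xi gam 1 - xi gam q" using xi_pos[OF assms] q by auto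
  then show "beta * x q \<le> (DX gam 1 + 1) / (xi gam 1 - xi gam q)"
    using main_bound[OF assms b mn q] by (simp add: pos_le_divide_eq)
qed

end
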